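(* Let $k\ge2$ be even, let $p\ge2$ be an integer, and let $G=C(p,p,\dots,p)$ ($k$ entries, all equal to $p$). Then the number $m(G)$ of distinct Laplacian eigenvalues of $G$ equals $k+1$.
   Context: $C(\alpha_1,\dots,\alpha_k)$ is defined recursively by $C(\alpha_1)=\overline{K_{\alpha_1}}$ (edgeless graph) and $C(\alpha_1,\dots,\alpha_i)=\overline{C(\alpha_1,\dots,\alpha_{i-1})\cup K_{\alpha_i}}$ for $i=2,\dots,k$ (disjoint union, then complement). Equivalently for $k$ even, with $\pi_i$ the $\alpha_i$ vertices introduced at step $i$: $\pi_i$ is a clique for $i$ odd, independent for $i$ even, and for $i<j$ vertices of $\pi_i,\pi_j$ are adjacent iff $j$ is even. Laplacian eigenvalues are those of $L=D-A$. *)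

theory Defs
  imports "Jordan_Normal_Form.Char_Poly"
begin

text \<open>Vertices of C(as) (as = [alpha_1,...,alpha_k]): pairs (i,j) with i < k the step
 (0-based, so step i here is step i+1 in the paper) and j < as!i.\<close>

definition C_vertices :: "nat list \<Rightarrow> (nat \<times> nat) set" where
  "C_vertices as = {(i, j). i < length as \<and> j < as ! i}"

text \<open>Adjacency of the graph C(alpha_1,...,alpha_m) built from the first m steps,
 following the recursive definition: C(alpha_1) is edgeless, and
 C(alpha_1..alpha_(i+1)) is the complement of the disjoint union of
 C(alpha_1..alpha_i) with the clique on the new step's vertices.\<close>

fun C_adj_prefix :: "nat list \<Rightarrow> nat \<Rightarrow> nat \<times> nat \<Rightarrow> nat \<times> nat \<Rightarrow> bool" where
  "C_adj_prefix as 0 u v = False"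
| "C_adj_prefix as (Suc 0) u v = False"
| "C_adj_prefix as (Suc (Suc i)) u v =
     (u \<noteq> v \<and>
      \<not> (if fst u \<le> i \<and> fst v \<le> i then C_adj_prefix as (Suc i) u v
         else if fst u = Suc i \<and> fst v = Suc i then True
         else False))"

definition C_adj :: "nat list \<Rightarrow> nat \<times> nat \<Rightarrow> nat \<times> nat \<Rightarrow> bool" where
  "C_adj as u v = (u \<in> C_vertices as \<and> v \<in> C_vertices as \<and> C_adj_prefix as (length as) u v)"

definition C_vlist :: "nat list \<Rightarrow> (nat \<times> nat) list" where
  "C_vlist as = concat (map (\<lambda>i. map (\<lambda>j. (i, j)) [0..<as ! i]) [0..<length as])"

definition C_degree :: "nat list \<Rightarrow> nat \<times> nat \<Rightarrow> nat" where
  "C_degree as u = card {v \<in> C_vertices as. C_adj as u v}"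

definition C_laplacian :: "nat list \<Rightarrow> real mat" where
  "C_laplacian as =
     (let vs = C_vlist as; n = length vs in
      mat n n (\<lambda>(a, b). if a = b then real (C_degree as (vs ! a))
                        else if C_adj as (vs ! a) (vs ! b) then -1 else 0))"

text \<open>Number of distinct Laplacian eigenvalues (the Laplacian is real symmetric,
 so all its eigenvalues are real).\<close>

definition m_lap :: "nat list \<Rightarrow> nat" where
  "m_lap as = card {x. eigenvalue (C_laplacian as) x}"

end

theory Submission
  imports Defs
begin


definition R :: "nat \<Rightarrow> nat \<Rightarrow> bool" where
  "R t s = (if t = s then even t else odd (max t s))"

lemma R_sym: "R t s = R s t"
  unfolding R_def by (auto simp: max.commute)

lemma sum_group: "(\<Sum>b<(k::nat)*p. f b) = (\<Sum>s<k. \<Sum>i<p. f (s*p+i))"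
proof (induction k)
  case 0 then show ?case by simp
next
  case (Suc k)
  have "(\<Sum>b<Suc k*p. f b) = (\<Sum>b<k*p. f b) + (\<Sum>b\<in>{k*p..<k*p+p}. f b)"
    by (simp add: sum.atLeastLessThan_concat[symmetric] lessThan_atLeast0 add.commute)
  also have "(\<Sum>b\<in>{k*p..<k*p+p}. f b) = (\<Sum>i<p. f (k*p+i))"
    using sum.shift_bounds_nat_ivl[of f 0 "k*p" p]
    by (simp add: lessThan_atLeast0 add.commute)
  finally show ?case using Suc by simp
qed

lemma antisym_sum:
  "(\<Sum>t<K. \<Sum>s<K. if R t s then (c t - c s :: real) else 0) = 0"
proof -
  have "(\<Sum>t<K. \<Sum>s<K. if R t s then (c t - c s :: real) else 0)
     = (\<Sum>t<K. \<Sum>s<K. if R t s then c t else 0) - (\<Sum>t<K. \<Sum>s<K. if R t s then c s else 0)"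
    by (simp add: sum_subtractf[symmetric] if_distrib if_distribR cong: if_cong)
  also have "(\<Sum>t<K. \<Sum>s<K. if R t s then c s else 0) = (\<Sum>s<K. \<Sum>t<K. if R t s then c s else 0)"
    by (rule sum.swap)
  also have "\<dots> = (\<Sum>t<K. \<Sum>s<K. if R t s then c t else 0)"
    by (simp add: R_sym)
  finally show ?thesis by simp
qed

lemma Q_lemma:
  "\<forall>x c. (\<forall>t<2*m. (\<Sum>s<2*m. if R t s then c t - c s else 0) = x * (c t :: real))
     \<longrightarrow> (\<forall>j\<le>2*m. x \<noteq> real j) \<longrightarrow> (\<forall>t<2*m. c t = 0)"
proof (induction m)
  case 0 then show ?case by simp
next
  case (Suc m)
  show ?case
  proof (intro allI impI)
    fix x and c :: "nat \<Rightarrow> real" and t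
    assume eq: "\<forall>t<2*Suc m. (\<Sum>s<2*Suc m. if R t s then c t - c s else 0) = x * c t"
      and nx: "\<forall>j\<le>2*Suc m. x \<noteq> real j" and t: "t < 2*Suc m"
    let ?K = "2*Suc m"
    have "x * (\<Sum>t<?K. c t) = (\<Sum>t<?K. x * c t)"
      by (simp only: sum_distrib_left)
    also have "\<dots> = (\<Sum>t<?K. \<Sum>s<?K. if R t s then c t - c s else 0)"
      by (rule sum.cong[OF refl]) (simp only: eq lessThan_iff)
    also have "\<dots> = 0" by (rule antisym_sum)
    finally have sum0: "(\<Sum>t<?K. c t) = 0" using nx[rule_format, of 0] by simp
    have top: "c (2*m+1) = 0"
    proof -
      have "(\<Sum>s<?K. if R (2*m+1) s then c (2*m+1) - c s else 0)
          = (\<Sum>s<2*m+1. c (2*m+1) - c s)"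
        by (simp add: R_def max_def)
      also have "\<dots> = (2*m+1) * c (2*m+1) - (\<Sum>s<2*m+1. c s)"
        by (simp add: sum_subtractf)
      also have "(\<Sum>s<2*m+1. c s) = - c (2*m+1)" using sum0 by simp
      finally have "(\<Sum>s<?K. if R (2*m+1) s then c (2*m+1) - c s else 0) = ?K * c (2*m+1)"
        by (simp add: algebra_simps)
      with eq[rule_format, of "2*m+1"] have "(real ?K - x) * c (2*m+1) = 0"
        by (simp add: algebra_simps)
      moreover have "real ?K \<noteq> x" using nx by auto
      ultimately show ?thesis by simp
    qed
    have sec: "c (2*m) = 0"
    proof -
      have "(\<Sum>s<?K. if R (2*m) s then c (2*m) - c s else 0) = c (2*m) - c (2*m+1)"
        by (simp add: R_def max_def)
      with eq[rule_format, of "2*m"] top have "(1 - x) * c (2*m) = 0"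
        by (simp add: algebra_simps)
      moreover have "1 \<noteq> x" using nx[rule_format, of 1] by auto
      ultimately show ?thesis by simp
    qed
    have low: "\<forall>t<2*m. (\<Sum>s<2*m. if R t s then c t - c s else 0) = (x - 1) * c t"
    proof (intro allI impI)
      fix t assume t: "t < 2*m"
      have "(\<Sum>s<?K. if R t s then c t - c s else 0)
          = (\<Sum>s<2*m. if R t s then c t - c s else 0) + c t"
        using t top sec by (simp add: R_def max_def)
      with eq[rule_format, of t] t show "(\<Sum>s<2*m. if R t s then c t - c s else 0) = (x - 1) * c t"
        by (simp add: algebra_simps)
    qed
    have "\<forall>j\<le>2*m. x - 1 \<noteq> real j"
    proof (intro allI impI)
      fix j :: nat assume "j \<le> 2*m"
      then have "j+1 \<le> 2*Suc m" by simp
      then have "x \<noteq> real (j+1)" using nx by blast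
      then show "x - 1 \<noteq> real j" by simp
    qed
    with Suc.IH low have lowz: "\<forall>t<2*m. c t = 0" by blast
    show "c t = 0"
    proof -
      have "t < 2*m \<or> t = 2*m \<or> t = 2*m+1" using t by auto
      then show ?thesis using lowz top sec by auto
    qed
  qed
qed

lemma N_lemma:
  "t < 2*m \<Longrightarrow> (\<Sum>s<2*m. if R t s then 1 else 0 :: nat)
     = (if even t then m - t div 2 + 1 else m + t div 2)"
proof (induction m arbitrary: t)
  case 0 then show ?case by simp
next
  case (Suc m)
  have split: "(\<Sum>s<2*Suc m. if R t s then 1 else 0 :: nat)
     = (\<Sum>s<2*m. if R t s then 1 else 0) + (if R t (2*m) then 1 else 0) + (if R t (2*m+1) then 1 else 0)"
    by simp
  have "t < 2*m \<or> t = 2*m \<or> t = 2*m+1" using Suc.prems by auto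
  then consider "t < 2*m" | "t = 2*m" | "t = 2*m+1" by blast
  then show ?case
  proof cases
    case 1
    then show ?thesis using split Suc.IH[OF 1] by (auto simp: R_def max_def)
  next
    case 2
    have "(\<Sum>s<2*m. if R t s then 1 else 0 :: nat) = 0"
      using 2 by (auto simp: R_def max_def intro!: sum.neutral)
    then show ?thesis using split 2 by (simp add: R_def)
  next
    case 3
    have "(\<Sum>s<2*m. if R t s then 1 else 0 :: nat) = (\<Sum>s<2*m. 1)"
      using 3 by (auto simp: R_def max_def intro!: sum.cong)
    then show ?thesis using split 3 by (simp add: R_def)
  qed
qed



lemma adj_prefix_closed:
  "fst u < m \<Longrightarrow> fst v < m \<Longrightarrow> C_adj_prefix as m u v =
    (u \<noteq> v \<and> (if fst u = fst v then odd (m - 1 - fst u) else even (m - 1 - max (fst u) (fst v))))"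
proof (induction as m u v rule: C_adj_prefix.induct)
  case (1 as u v) then show ?case by simp
next
  case (2 as u v) then show ?case by simp
next
  case (3 as i u v)
  show ?case
  proof (cases "fst u \<le> i \<and> fst v \<le> i")
    case True
    then have "C_adj_prefix as (Suc i) u v = (u \<noteq> v \<and> (if fst u = fst v then odd (i - fst u) else even (i - max (fst u) (fst v))))"
      using 3(1) by simp
    then show ?thesis using True
      by (auto simp: max_def Suc_diff_le)
  next
    case False
    have "fst u = Suc i \<or> fst v = Suc i" using False 3(2,3) by linarith
    then show ?thesis using 3(2,3) False
      by (elim disjE; cases "fst u = fst v"; simp add: max_def)
  qed
qed

lemma vlist_rep: "C_vlist (replicate k p) = map (\<lambda>b. (b div p, b mod p)) [0..<k*p]"
proof -
  have "C_vlist (replicate k p) = concat (map (\<lambda>i. map (\<lambda>j. (i, j)) [0..<p]) [0..<k])"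
    unfolding C_vlist_def by (auto intro!: arg_cong[where f=concat] map_cong)
  also have "\<dots> = map (\<lambda>b. (b div p, b mod p)) [0..<k*p]"
  proof (induction k)
    case 0 then show ?case by simp
  next
    case (Suc k)
    have "[0..<Suc k * p] = [0..<k*p] @ [k*p..<k*p+p]"
      using upt_add_eq_append[OF le0, of "k*p" p] by (simp add: add.commute)
    moreover have "map (\<lambda>b. (b div p, b mod p)) [k*p..<k*p+p] = map (\<lambda>j. (k, j)) [0..<p]"
      by (rule nth_equalityI) auto
    ultimately show ?case using Suc by simp
  qed
  finally show ?thesis .
qed



lemma adj_rep:
  assumes "even k"
  shows "C_adj (replicate k p) (t,j) (s,i) = (t<k \<and> j<p \<and> s<k \<and> i<p \<and> (t,j)\<noteq>(s,i) \<and> R t s)"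
proof -
  have A: "t<k \<Longrightarrow> s<k \<Longrightarrow> C_adj_prefix (replicate k p) k (t,j) (s,i) =
    ((t,j) \<noteq> (s,i) \<and> (if t = s then odd (k - 1 - t) else even (k - 1 - max t s)))"
    using adj_prefix_closed[of "(t,j)" k "(s,i)"] by simp
  have par: "x<k \<Longrightarrow> odd (k - 1 - x) = even x" for x
  proof -
    assume "x < k"
    then have "(k-1-x)+x+1 = k" by simp
    then have "even ((k-1-x)+x+1)" using assms by simp
    then show ?thesis by simp
  qed
  have B: "t<k \<Longrightarrow> odd (k - 1 - t) = even t" using par by blast
  have C: "max t s < k \<Longrightarrow> even (k - 1 - max t s) = odd (max t s)" using par by blast
  have D: "t<k \<Longrightarrow> s<k \<Longrightarrow> C_adj_prefix (replicate k p) k (t,j) (s,i) = ((t,j)\<noteq>(s,i) \<and> R t s)"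
  proof (cases "t = s")
    case True
    assume "t<k" "s<k"
    then show ?thesis using A B True unfolding R_def by (metis (full_types))
  next
    case False
    assume "t<k" "s<k"
    then have "max t s < k" by simp
    then show ?thesis using A[OF \<open>t<k\<close> \<open>s<k\<close>] C False unfolding R_def by (metis (full_types))
  qed
  show ?thesis
    unfolding C_adj_def C_vertices_def using D by auto
qed

lemma divmod_inj: "inj_on (\<lambda>b::nat. (b div p, b mod p)) A"
  by (rule inj_onI) (metis div_mult_mod_eq prod.inject)

lemma deg_rep:
  assumes "even k"
  shows "C_degree (replicate k p) x = card {b. b < k*p \<and> C_adj (replicate k p) x (b div p, b mod p)}"
proof -
  let ?as = "replicate k p"
  have "{v \<in> C_vertices ?as. C_adj ?as x v} = (\<lambda>b. (b div p, b mod p)) ` {b. b < k*p \<and> C_adj ?as x (b div p, b mod p)}"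
  proof (intro equalityI subsetI)
    fix v assume v: "v \<in> {v \<in> C_vertices ?as. C_adj ?as x v}"
    obtain s i where si: "v = (s,i)" by (cases v)
    then have "s < k" "i < p" using v by (auto simp: C_vertices_def)
    have "s*p+i < Suc s * p" using \<open>i<p\<close> by simp
    also have "Suc s * p \<le> k*p" using \<open>s<k\<close> by (intro mult_le_mono1) simp
    finally have "s*p+i < k*p" .
    moreover have "(s*p+i) div p = s" "(s*p+i) mod p = i" using \<open>i<p\<close> by auto
    ultimately show "v \<in> (\<lambda>b. (b div p, b mod p)) ` {b. b < k*p \<and> C_adj ?as x (b div p, b mod p)}"
      using v si by (auto intro!: image_eqI[where x="s*p+i"])
  next
    fix v assume "v \<in> (\<lambda>b. (b div p, b mod p)) ` {b. b < k*p \<and> C_adj ?as x (b div p, b mod p)}"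
    then show "v \<in> {v \<in> C_vertices ?as. C_adj ?as x v}" by (auto simp: C_adj_def)
  qed
  then show ?thesis unfolding C_degree_def
    by (simp add: card_image divmod_inj)
qed

lemma lap_dim: "dim_row (C_laplacian (replicate k p)) = k*p" "dim_col (C_laplacian (replicate k p)) = k*p"
  by (simp_all add: C_laplacian_def Let_def vlist_rep)

lemma lap_mult:
  assumes "even k" "a < k*p" "dim_vec v = k*p"
  shows "(C_laplacian (replicate k p) *\<^sub>v v) $ a =
    (\<Sum>b<k*p. if C_adj (replicate k p) (a div p, a mod p) (b div p, b mod p) then v$a - v$b else 0)"
proof -
  let ?as = "replicate k p"
  let ?E = "\<lambda>b. C_adj ?as (a div p, a mod p) (b div p, b mod p)"
  have Eaa: "\<not> ?E a" by (simp add: adj_rep[OF assms(1)])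
  have "(C_laplacian ?as *\<^sub>v v) $ a = (\<Sum>b\<in>{0..<k*p}. (if a = b then real (C_degree ?as (a div p, a mod p))
                        else if ?E b then -1 else 0) * v $ b)"
    using assms by (auto simp: lap_dim C_laplacian_def Let_def vlist_rep scalar_prod_def row_def intro!: sum.cong)
  also have "\<dots> = real (C_degree ?as (a div p, a mod p)) * v$a + (\<Sum>b<k*p. if ?E b then - v$b else 0)"
  proof -
    have "(\<Sum>b\<in>{0..<k*p}. (if a = b then real (C_degree ?as (a div p, a mod p))
                        else if ?E b then -1 else 0) * v $ b)
        = (\<Sum>b<k*p. (if a = b then real (C_degree ?as (a div p, a mod p)) * v$a else 0) + (if ?E b then - v$b else 0))"
      using Eaa by (intro sum.cong) auto
    also have "\<dots> = real (C_degree ?as (a div p, a mod p)) * v$a + (\<Sum>b<k*p. if ?E b then - v$b else 0)"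
      using assms(2) by (simp add: sum.distrib)
    finally show ?thesis by (simp add: lessThan_atLeast0)
  qed
  also have "\<dots> = (\<Sum>b<k*p. if ?E b then v$a - v$b else 0)"
  proof -
    have "(\<Sum>b<k*p. if ?E b then v$a - v$b else 0) = (\<Sum>b\<in>{b\<in>{..<k*p}. ?E b}. v$a - v$b)"
      by (rule sum.inter_filter[symmetric]) simp
    also have "\<dots> = real (card {b\<in>{..<k*p}. ?E b}) * v$a - (\<Sum>b\<in>{b\<in>{..<k*p}. ?E b}. v$b)"
      by (simp add: sum_subtractf)
    also have "(\<Sum>b\<in>{b\<in>{..<k*p}. ?E b}. v$b) = (\<Sum>b<k*p. if ?E b then v$b else 0)"
      by (rule sum.inter_filter) simp
    finally show ?thesis
      using deg_rep[OF assms(1), where x="(a div p, a mod p)" and p=p]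
      by (simp add: sum_negf[symmetric] if_distrib cong: if_cong)
  qed
  finally show ?thesis .
qed



lemma lt_kp: "s < k \<Longrightarrow> i < (p::nat) \<Longrightarrow> s*p+i < k*p"
proof -
  assume "s<k" "i<p"
  have "s*p+i < Suc s * p" using \<open>i<p\<close> by simp
  also have "Suc s * p \<le> k*p" using \<open>s<k\<close> by (intro mult_le_mono1) simp
  finally show ?thesis .
qed

lemma lap_H:
  assumes "even k" "t < k" "j < p" "dim_vec v = k*p"
  shows "(C_laplacian (replicate k p) *\<^sub>v v) $ (t*p+j) =
    (\<Sum>s<k. if R t s then (\<Sum>i<p. v$(t*p+j) - v$(s*p+i)) else 0)"
proof -
  let ?as = "replicate k p"
  have a: "t*p+j < k*p" using assms lt_kp by blast
  have dm: "(t*p+j) div p = t" "(t*p+j) mod p = j" using assms(3) by auto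
  have "(C_laplacian ?as *\<^sub>v v) $ (t*p+j) =
    (\<Sum>b<k*p. if C_adj ?as (t, j) (b div p, b mod p) then v$(t*p+j) - v$b else 0)"
    using lap_mult[OF assms(1) a assms(4)] dm by simp
  also have "\<dots> = (\<Sum>s<k. \<Sum>i<p. if C_adj ?as (t, j) ((s*p+i) div p, (s*p+i) mod p) then v$(t*p+j) - v$(s*p+i) else 0)"
    by (rule sum_group)
  also have "\<dots> = (\<Sum>s<k. if R t s then (\<Sum>i<p. v$(t*p+j) - v$(s*p+i)) else 0)"
  proof (rule sum.cong[OF refl])
    fix s assume s: "s \<in> {..<k}"
    show "(\<Sum>i<p. if C_adj ?as (t, j) ((s*p+i) div p, (s*p+i) mod p) then v$(t*p+j) - v$(s*p+i) else 0)
        = (if R t s then (\<Sum>i<p. v$(t*p+j) - v$(s*p+i)) else 0)"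
    proof (cases "R t s")
      case True
      show ?thesis using True s assms by (auto simp: adj_rep intro!: sum.cong)
    next
      case False
      show ?thesis using False s assms by (auto simp: adj_rep intro!: sum.neutral)
    qed
  qed
  finally show ?thesis .
qed

definition Nn :: "nat \<Rightarrow> nat \<Rightarrow> nat" where
  "Nn k t = (\<Sum>s<k. if R t s then 1 else 0)"

lemma Nn_le: "Nn k t \<le> k"
proof -
  have "Nn k t \<le> (\<Sum>s<k. (1::nat))" unfolding Nn_def by (intro sum_mono) auto
  then show ?thesis by simp
qed

lemma H_split:
  "(\<Sum>s<k. if R t s then (\<Sum>i<p. (x::real) - w s i) else 0)
   = real p * real (Nn k t) * x - (\<Sum>s<k. if R t s then (\<Sum>i<p. w s i) else 0)"
proof -
  have "(\<Sum>s<k. if R t s then (\<Sum>i<p. x - w s i) else 0)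
      = (\<Sum>s<k. (if R t s then real p * x else 0) - (if R t s then (\<Sum>i<p. w s i) else 0))"
    by (intro sum.cong) (auto simp: sum_subtractf)
  also have "\<dots> = (\<Sum>s<k. if R t s then real p * x else 0) - (\<Sum>s<k. if R t s then (\<Sum>i<p. w s i) else 0)"
    by (simp add: sum_subtractf)
  also have "(\<Sum>s<k. if R t s then real p * x else 0) = real p * real (Nn k t) * x"
    unfolding Nn_def of_nat_sum sum_distrib_left sum_distrib_right
    by (intro sum.cong) auto
  finally show ?thesis .
qed



lemma eigen_only:
  assumes k: "even k" and p: "p > 0"
    and ev: "eigenvalue (C_laplacian (replicate k p)) \<mu>"
  shows "\<exists>j\<le>k. \<mu> = real (j*p)"
proof (rule ccontr)
  assume nmu: "\<not> (\<exists>j\<le>k. \<mu> = real (j*p))"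
  let ?L = "C_laplacian (replicate k p)"
  obtain v where v: "v \<in> carrier_vec (k*p)" "v \<noteq> 0\<^sub>v (k*p)" "?L *\<^sub>v v = \<mu> \<cdot>\<^sub>v v"
    using ev unfolding eigenvalue_def eigenvector_def by (auto simp: lap_dim)
  have dv: "dim_vec v = k*p" using v(1) by simp
  define W where "W s = (\<Sum>i<p. v$(s*p+i))" for s
  define B where "B t = (\<Sum>s<k. if R t s then W s else 0)" for t
  have eq: "real p * real (Nn k t) * v$(t*p+j) - B t = \<mu> * v$(t*p+j)" if "t<k" "j<p" for t j
  proof -
    have "(?L *\<^sub>v v) $ (t*p+j) = \<mu> * v$(t*p+j)"
      using v(3) lt_kp[OF that] dv by (metis index_smult_vec(1))
    then show ?thesis using lap_H[OF k that dv] H_split[where k=k and t=t and p=p and x="v$(t*p+j)" and w="\<lambda>s i. v$(s*p+i)"]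
      unfolding B_def W_def by simp
  qed
  have ne: "real p * real (Nn k t) \<noteq> \<mu>" for t
  proof
    assume "real p * real (Nn k t) = \<mu>"
    then have "\<mu> = real (Nn k t * p)" by (simp add: mult.commute)
    with nmu Nn_le show False by blast
  qed
  have const: "v$(t*p+j) = v$(t*p)" if "t<k" "j<p" for t j
  proof -
    have "(real p * real (Nn k t) - \<mu>) * v$(t*p+j) = B t" using eq[OF that] by (simp add: algebra_simps)
    moreover have "(real p * real (Nn k t) - \<mu>) * v$(t*p+0) = B t" using eq[OF that(1) p] by (simp add: algebra_simps)
    ultimately have "(real p * real (Nn k t) - \<mu>) * (v$(t*p+j) - v$(t*p)) = 0"
      by (simp add: algebra_simps)
    then show ?thesis using ne[of t] by simp
  qed
  define c where "c t = v$(t*p)" for t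
  have ceq: "(\<Sum>s<k. if R t s then c t - c s else 0) = (\<mu> / real p) * c t" if t: "t<k" for t
  proof -
    have "(?L *\<^sub>v v) $ (t*p+0) = \<mu> * v$(t*p+0)"
      using v(3) lt_kp[OF t p] dv by (metis index_smult_vec(1))
    then have "(\<Sum>s<k. if R t s then (\<Sum>i<p. v$(t*p+0) - v$(s*p+i)) else 0) = \<mu> * c t"
      using lap_H[OF k t p dv] unfolding c_def by simp
    moreover have "(\<Sum>s<k. if R t s then (\<Sum>i<p. v$(t*p+0) - v$(s*p+i)) else 0)
        = real p * (\<Sum>s<k. if R t s then c t - c s else 0)"
      unfolding sum_distrib_left
      by (intro sum.cong refl) (auto simp: c_def const)
    ultimately show ?thesis using p by (simp add: field_simps)
  qed
  obtain m where m: "k = 2*m" using k by blast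
  have nx: "\<forall>j\<le>2*m. \<mu> / real p \<noteq> real j"
  proof (intro allI impI)
    fix j assume "j \<le> 2*m"
    then have "\<mu> \<noteq> real (j*p)" using nmu m by blast
    then show "\<mu> / real p \<noteq> real j" using p by (auto simp: field_simps)
  qed
  have cz: "\<forall>t<k. c t = 0"
    using Q_lemma[of m] ceq nx m by blast
  have "v = 0\<^sub>v (k*p)"
  proof (rule eq_vecI)
    show "dim_vec v = dim_vec (0\<^sub>v (k*p))" using dv by simp
    fix a assume "a < dim_vec (0\<^sub>v (k*p))"
    then have a: "a < k*p" by simp
    then have "a div p < k" by (simp add: less_mult_imp_div_less)
    moreover have "a mod p < p" using p by simp
    moreover have "a = (a div p)*p + a mod p" by simp
    ultimately have "v$a = c (a div p)" using const unfolding c_def by metis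
    then show "v$a = 0\<^sub>v (k*p) $ a" using cz \<open>a div p < k\<close> a by simp
  qed
  with v(2) show False by simp
qed



lemma eig_from_w:
  assumes k: "even k" and p: "p > 0" and t0: "t0 < k" "jz < p" "w t0 jz \<noteq> 0"
    and eqs: "\<And>t j. t<k \<Longrightarrow> j<p \<Longrightarrow> (\<Sum>s<k. if R t s then (\<Sum>i<p. w t j - w s i) else 0) = \<mu> * w t j"
  shows "eigenvalue (C_laplacian (replicate k p)) \<mu>"
proof -
  let ?L = "C_laplacian (replicate k p)"
  define V where "V = vec (k*p) (\<lambda>b. w (b div p) (b mod p))"
  have dV: "dim_vec V = k*p" by (simp add: V_def)
  have Vat: "V $ (s*p+i) = w s i" if "s<k" "i<p" for s i
    using that lt_kp[OF that] by (simp add: V_def)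
  have nz: "V \<noteq> 0\<^sub>v (k*p)"
  proof
    assume "V = 0\<^sub>v (k*p)"
    then have "V $ (t0*p+jz) = 0" using lt_kp[OF t0(1,2)] by simp
    then show False using Vat[OF t0(1,2)] t0(3) by simp
  qed
  have mv: "?L *\<^sub>v V = \<mu> \<cdot>\<^sub>v V"
  proof (rule eq_vecI)
    show "dim_vec (?L *\<^sub>v V) = dim_vec (\<mu> \<cdot>\<^sub>v V)" using dV by (simp add: lap_dim)
    fix a assume "a < dim_vec (\<mu> \<cdot>\<^sub>v V)"
    then have a: "a < k*p" using dV by simp
    define t where "t = a div p"
    define j where "j = a mod p"
    have t: "t < k" unfolding t_def using a by (simp add: less_mult_imp_div_less)
    have j: "j < p" unfolding j_def using p by simp
    have aeq: "a = t*p+j" unfolding t_def j_def by simp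
    have "(?L *\<^sub>v V) $ (t*p+j) = (\<Sum>s<k. if R t s then (\<Sum>i<p. V$(t*p+j) - V$(s*p+i)) else 0)"
      by (rule lap_H[OF k t j dV])
    also have "\<dots> = (\<Sum>s<k. if R t s then (\<Sum>i<p. w t j - w s i) else 0)"
    proof (rule sum.cong[OF refl])
      fix s assume "s \<in> {..<k}"
      then have "(\<Sum>i<p. V$(t*p+j) - V$(s*p+i)) = (\<Sum>i<p. w t j - w s i)"
        by (intro sum.cong refl) (simp add: Vat t j)
      then show "(if R t s then (\<Sum>i<p. V$(t*p+j) - V$(s*p+i)) else 0) = (if R t s then (\<Sum>i<p. w t j - w s i) else 0)"
        by simp
    qed
    also have "\<dots> = \<mu> * V$(t*p+j)" using eqs[OF t j] Vat[OF t j] by simp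
    also have "\<dots> = (\<mu> \<cdot>\<^sub>v V) $ (t*p+j)" using lt_kp[OF t j] dV by simp
    finally show "(?L *\<^sub>v V) $ a = (\<mu> \<cdot>\<^sub>v V) $ a" unfolding aeq .
  qed
  have cv: "V \<in> carrier_vec (k*p)" by (rule carrier_vecI[OF dV])
  have "eigenvector ?L V \<mu>" unfolding eigenvector_def lap_dim using nz mv cv by (intro conjI)
  then show ?thesis unfolding eigenvalue_def by (rule exI)
qed

lemma eig_diff:
  assumes k: "even k" and p: "p \<ge> 2" and t0: "t0 < k"
  shows "eigenvalue (C_laplacian (replicate k p)) (real p * real (Nn k t0))"
proof -
  define w :: "nat \<Rightarrow> nat \<Rightarrow> real" where "w t j = (if t = t0 then ((if j=0 then 1 else 0) - (if j=1 then 1 else 0)) else (0::real))" for t j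
  have ws: "(\<Sum>i<p. w s i) = 0" for s
  proof (cases "s = t0")
    case True
    have "(\<Sum>i<p. w s i) = (\<Sum>i<p. (if i=0 then 1 else 0) - (if i=1 then 1 else (0::real)))"
      using True by (simp add: w_def)
    also have "\<dots> = (\<Sum>i<p. if i=0 then 1 else (0::real)) - (\<Sum>i<p. if i=1 then 1 else (0::real))"
      by (rule sum_subtractf)
    also have "\<dots> = 0" using p by (simp add: sum.delta)
    finally show ?thesis .
  next
    case False then show ?thesis by (simp add: w_def)
  qed
  show ?thesis
  proof (rule eig_from_w[where jz=0 and w=w, OF k _ t0])
    show "0 < p" "0 < p" using p by auto
    show "w t0 0 \<noteq> 0" by (simp add: w_def)
    fix t j assume "t<k" "j<p"
    show "(\<Sum>s<k. if R t s then (\<Sum>i<p. w t j - w s i) else 0) = real p * real (Nn k t0) * w t j"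
    proof -
      have z: "(\<Sum>s<k. if R t s then (\<Sum>i<p. w s i) else 0) = 0" using ws by (intro sum.neutral) simp
      have "(\<Sum>s<k. if R t s then (\<Sum>i<p. w t j - w s i) else 0) = real p * real (Nn k t) * w t j"
        using H_split[where k=k and t=t and p=p and x="w t j" and w=w] z by simp
      moreover have "t \<noteq> t0 \<Longrightarrow> w t j = 0" by (simp add: w_def)
      ultimately show ?thesis by (cases "t = t0") simp_all
    qed
  qed
qed

lemma eig_const:
  assumes k: "even k" and p: "p > 0" and tz: "tz < k" "c tz \<noteq> 0"
    and eqs: "\<And>t. t<k \<Longrightarrow> real p * (\<Sum>s<k. if R t s then c t - c s else 0) = \<mu> * c t"
  shows "eigenvalue (C_laplacian (replicate k p)) \<mu>"
proof (rule eig_from_w[OF k p tz(1) p, where w="\<lambda>t j. c t"])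
  show "c tz \<noteq> 0" by (rule tz(2))
  fix t j assume t: "t<k" "j<p"
  have "(\<Sum>s<k. if R t s then (\<Sum>i<p. c t - c s) else 0) = real p * (\<Sum>s<k. if R t s then c t - c s else 0)"
    unfolding sum_distrib_left by (intro sum.cong) auto
  then show "(\<Sum>s<k. if R t s then (\<Sum>i<p. c t - c s) else 0) = \<mu> * c t" using eqs[OF t(1)] by simp
qed



lemma eig_zero:
  assumes k: "even k" "k \<ge> 2" and p: "p > 0"
  shows "eigenvalue (C_laplacian (replicate k p)) 0"
  by (rule eig_const[OF k(1) p, where tz=0 and c="\<lambda>t. 1"]) (use k in \<open>auto intro!: sum.neutral\<close>)

lemma eig_top:
  assumes k: "even k" "k \<ge> 2" and p: "p > 0"
  shows "eigenvalue (C_laplacian (replicate k p)) (real (k*p))"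
proof -
  obtain K where K: "k = Suc K" using k by (cases k) auto
  have oK: "odd K" using K k by simp
  define c where "c t = (if t = K then real K else -1)" for t
  show ?thesis
  proof (rule eig_const[OF k(1) p, where tz=K and c=c])
    show "K < k" "c K \<noteq> 0" using K k by (auto simp: c_def)
    fix t assume t: "t < k"
    have "(\<Sum>s<k. if R t s then c t - c s else 0) = real k * c t"
    proof (cases "t = K")
      case True
      have "(\<Sum>s<K. if R t s then c t - c s else 0) = (\<Sum>s<K. real K + 1)"
        using True oK by (intro sum.cong) (auto simp: R_def c_def max_def)
      then show ?thesis using True K by (simp add: c_def algebra_simps)
    next
      case False
      then have tK: "t < K" using t K by simp
      have "(\<Sum>s<K. if R t s then c t - c s else 0) = 0"
        using tK by (intro sum.neutral) (auto simp: c_def)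
      moreover have "R t K" using tK oK by (simp add: R_def max_def)
      ultimately show ?thesis using tK K by (simp add: c_def algebra_simps)
    qed
    then show "real p * (\<Sum>s<k. if R t s then c t - c s else 0) = real (k*p) * c t"
      by simp
  qed
qed

lemma eig_one:
  assumes k: "even k" "k \<ge> 4" and p: "p > 0"
  shows "eigenvalue (C_laplacian (replicate k p)) (real p)"
proof -
  obtain K where K: "k = Suc (Suc K)" using k by (cases k; cases "k - 1") auto
  have eK: "even K" "K \<ge> 2" using K k by auto
  define c where "c t = (if t < K then 1 else if t = K then - real K else 0)" for t
  show ?thesis
  proof (rule eig_const[OF k(1) p, where tz=0 and c=c])
    show "0 < k" "c 0 \<noteq> 0" using K eK by (auto simp: c_def)
    fix t assume t: "t < k"
    have split: "(\<Sum>s<k. if R t s then c t - c s else 0) =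
       (\<Sum>s<K. if R t s then c t - c s else 0) + (if R t K then c t - c K else 0)
       + (if R t (Suc K) then c t - c (Suc K) else 0)"
      using K by simp
    have "(\<Sum>s<k. if R t s then c t - c s else 0) = c t"
    proof -
      consider "t < K" | "t = K" | "t = Suc K" using t K by linarith
      then show ?thesis
      proof cases
        case 1
        have "(\<Sum>s<K. if R t s then c t - c s else 0) = 0"
          using 1 by (intro sum.neutral) (auto simp: c_def)
        moreover have "\<not> R t K" "R t (Suc K)" using 1 eK by (auto simp: R_def max_def)
        ultimately show ?thesis using split 1 by (simp add: c_def)
      next
        case 2
        have "(\<Sum>s<K. if R t s then c t - c s else 0) = 0"
          using 2 eK by (intro sum.neutral) (auto simp: R_def max_def)
        moreover have "R t (Suc K)" using 2 eK by (auto simp: R_def max_def)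
        ultimately show ?thesis using split 2 by (simp add: c_def)
      next
        case 3
        have "(\<Sum>s<K. if R t s then c t - c s else 0) = (\<Sum>s<K. -1)"
          using 3 eK by (intro sum.cong) (auto simp: R_def max_def c_def)
        moreover have "R t K" using 3 eK by (auto simp: R_def max_def)
        ultimately show ?thesis using split 3 by (simp add: c_def)
      qed
    qed
    then show "real p * (\<Sum>s<k. if R t s then c t - c s else 0) = real p * c t"
      by simp
  qed
qed



theorem theorem3p2:
  fixes k p :: nat
  assumes "k \<ge> 2" and "even k" and "p \<ge> 2"
  shows "m_lap (replicate k p) = k + 1"
proof -
  let ?L = "C_laplacian (replicate k p)"
  have p0: "p > 0" using assms by simp
  obtain m where m: "k = 2*m" using assms(2) by blast
  have m1: "m \<ge> 1" using m assms by simp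
  have every: "eigenvalue ?L (real (j*p))" if j: "j \<le> k" for j
  proof -
    have diff: "eigenvalue ?L (real (j*p))" if t: "t < k" "Nn k t = j" for t
      using eig_diff[OF assms(2) assms(3) t(1)] t(2) by (simp add: mult.commute)
    consider "j = 0" | "j = k" | "j = 1 \<and> m \<ge> 2" | "m \<le> j \<and> j < k" | "2 \<le> j \<and> j < m"
      using j m by linarith
    then show ?thesis
    proof cases
      case 1 then show ?thesis using eig_zero[OF assms(2,1) p0] by simp
    next
      case 2 then show ?thesis using eig_top[OF assms(2,1) p0] by simp
    next
      case 3 then show ?thesis using eig_one[OF assms(2) _ p0] m by simp
    next
      case 4
      define t where "t = 2*(j-m)+1"
      have t: "t < k" using 4 m unfolding t_def by arith
      have "Nn k t = j" unfolding Nn_def m using N_lemma[of t m] t 4 m unfolding t_def by simp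
      then show ?thesis using diff t by simp
    next
      case 5
      define t where "t = 2*(m-j+1)"
      have t: "t < k" using 5 m unfolding t_def by arith
      have "Nn k t = j" unfolding Nn_def m using N_lemma[of t m] t 5 m unfolding t_def by simp
      then show ?thesis using diff t by simp
    qed
  qed
  have S: "{x. eigenvalue ?L x} = (\<lambda>j. real (j*p)) ` {..k}"
  proof (intro equalityI subsetI)
    fix x assume "x \<in> {x. eigenvalue ?L x}"
    then obtain j where "j \<le> k" "x = real (j*p)" using eigen_only[OF assms(2) p0] by blast
    then show "x \<in> (\<lambda>j. real (j*p)) ` {..k}" by auto
  next
    fix x assume "x \<in> (\<lambda>j. real (j*p)) ` {..k}"
    then show "x \<in> {x. eigenvalue ?L x}" using every by auto
  qed
  have inj: "inj_on (\<lambda>j. real (j*p)) {..k}"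
    by (rule inj_onI) (use p0 in simp)
  show ?thesis unfolding m_lap_def S using card_image[OF inj] by simp
qed


end
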